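(* There exists a family of CNFs $(\Delta_n)_{n \ge 3}$, where $\Delta_n$ has $n^3$ clauses, such that: (i) the primal treewidth of $\Delta_n$ is at least $n$ (in particular unbounded), and (ii) applying the BVA transformation 2 times to $\Delta_n$ can generate a CNF whose primal treewidth is at most 2.
   Context: BVA transformation: given a CNF $\Delta$ and a fresh variable $Y$ not occurring in $\Delta$, choose a set $C_Y = \{Y \vee \alpha_1,\ldots, Y\vee \alpha_m\}$ of clauses containing literal $Y$ and a set $C_{\neg Y} = \{\neg Y \vee \beta_1,\ldots,\neg Y\vee\beta_k\}$ of clauses containing $\neg Y$ (with $\alpha_i,\beta_j$ clauses over variables of $\Delta$) such that the set of resolvents $C_Y \bowtie C_{\neg Y} = \{\alpha_i \vee \beta_j\}$ is contained in the clauses of $\Delta$ and $|C_Y \bowtie C_{\neg Y}| > |C_Y| + |C_{\neg Y}|$; the result is $\Delta$ with the clauses $C_Y \bowtie C_{\neg Y}$ removed and the clauses $C_Y \cup C_{\neg Y}$ added. Primal treewidth: a jointree for a CNF $\Delta$ is a tree whose vertices are labeled with subsets (clusters) of the variables of $\Delta$ such that (i) for each clause some cluster contains all its variables, and (ii) if a variable appears in two clusters then it appears in every cluster on the path between them. The width of a jointree is its largest cluster size minus 1; the primal treewidth of $\Delta$ is the minimum width over its jointrees. *)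

theory Defs
  imports Main
begin

datatype 'v lit = Pos 'v | Neg 'v

fun var :: "'v lit \<Rightarrow> 'v" where
  "var (Pos x) = x" | "var (Neg x) = x"

type_synonym 'v clause = "'v lit set"
type_synonym 'v cnf = "'v clause set"

definition vars_cl :: "'v clause \<Rightarrow> 'v set" where
  "vars_cl C = var ` C"

definition vars :: "'v cnf \<Rightarrow> 'v set" where
  "vars \<Delta> = (\<Union>C\<in>\<Delta>. vars_cl C)"

definition is_cnf :: "'v cnf \<Rightarrow> bool" where
  "is_cnf \<Delta> \<longleftrightarrow> finite \<Delta> \<and> (\<forall>C\<in>\<Delta>. finite C)"

text \<open>Resolvents of C_Y = {Y \<or> \<alpha> | \<alpha> \<in> A} and C_{\<not>Y} = {\<not>Y \<or> \<beta> | \<beta> \<in> B}.\<close>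
definition resolvents :: "'v clause set \<Rightarrow> 'v clause set \<Rightarrow> 'v clause set" where
  "resolvents A B = {\<alpha> \<union> \<beta> | \<alpha> \<beta>. \<alpha> \<in> A \<and> \<beta> \<in> B}"

definition bva_step :: "'v cnf \<Rightarrow> 'v cnf \<Rightarrow> bool" where
  "bva_step \<Delta> \<Delta>' \<longleftrightarrow>
     (\<exists>Y A B.
        Y \<notin> vars \<Delta> \<and>
        finite A \<and> finite B \<and>
        (\<forall>\<alpha>\<in>A. finite \<alpha> \<and> vars_cl \<alpha> \<subseteq> vars \<Delta>) \<and>
        (\<forall>\<beta>\<in>B. finite \<beta> \<and> vars_cl \<beta> \<subseteq> vars \<Delta>) \<and>
        resolvents A B \<subseteq> \<Delta> \<and>
        card (resolvents A B) > card (insert (Pos Y) ` A) + card (insert (Neg Y) ` B) \<and>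
        \<Delta>' = (\<Delta> - resolvents A B) \<union> (insert (Pos Y) ` A) \<union> (insert (Neg Y) ` B))"

definition is_path :: "nat set set \<Rightarrow> nat list \<Rightarrow> nat \<Rightarrow> nat \<Rightarrow> bool" where
  "is_path E p u v \<longleftrightarrow> p \<noteq> [] \<and> hd p = u \<and> last p = v \<and> distinct p \<and>
     (\<forall>i. Suc i < length p \<longrightarrow> {p ! i, p ! Suc i} \<in> E)"

definition is_tree :: "nat set \<Rightarrow> nat set set \<Rightarrow> bool" where
  "is_tree V E \<longleftrightarrow> finite V \<and> V \<noteq> {} \<and>
     (\<forall>e\<in>E. \<exists>u v. u \<in> V \<and> v \<in> V \<and> u \<noteq> v \<and> e = {u, v}) \<and>
     (\<forall>u\<in>V. \<forall>v\<in>V. \<exists>p. is_path E p u v) \<and>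
     card E + 1 = card V"

definition jointree :: "'v cnf \<Rightarrow> nat set \<Rightarrow> nat set set \<Rightarrow> (nat \<Rightarrow> 'v set) \<Rightarrow> bool" where
  "jointree \<Delta> V E \<chi> \<longleftrightarrow> is_tree V E \<and>
     (\<forall>t\<in>V. \<chi> t \<subseteq> vars \<Delta>) \<and>
     (\<forall>C\<in>\<Delta>. \<exists>t\<in>V. vars_cl C \<subseteq> \<chi> t) \<and>
     (\<forall>x u v p. u \<in> V \<and> v \<in> V \<and> x \<in> \<chi> u \<and> x \<in> \<chi> v \<and> is_path E p u v
        \<longrightarrow> (\<forall>w\<in>set p. x \<in> \<chi> w))"

definition jt_width :: "nat set \<Rightarrow> (nat \<Rightarrow> 'v set) \<Rightarrow> nat" where
  "jt_width V \<chi> = Max ((\<lambda>t. card (\<chi> t)) ` V) - 1"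

definition primal_tw :: "'v cnf \<Rightarrow> nat" where
  "primal_tw \<Delta> = (LEAST w. \<exists>V E \<chi>. jointree \<Delta> V E \<chi> \<and> jt_width V \<chi> = w)"

end

theory Submission
  imports Defs
begin

fun ch :: "nat set set \<Rightarrow> nat list \<Rightarrow> bool" where
  "ch E (x # y # zs) = ({x,y} \<in> E \<and> ch E (y # zs))"
| "ch E _ = True"

lemma ch_iff: "ch E p = (\<forall>i. Suc i < length p \<longrightarrow> {p ! i, p ! Suc i} \<in> E)"
proof (induction E p rule: ch.induct)
  case (1 E x y zs)
  have "(\<forall>i. Suc i < length (x # y # zs) \<longrightarrow> {(x # y # zs) ! i, (x # y # zs) ! Suc i} \<in> E)
     = ({x,y} \<in> E \<and> (\<forall>i. Suc i < length (y # zs) \<longrightarrow> {(y # zs) ! i, (y # zs) ! Suc i} \<in> E))"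
    (is "?L = ?R")
  proof
    assume ?L
    then show ?R by force
  next
    assume r: ?R
    show ?L
    proof (intro allI impI)
      fix i assume "Suc i < length (x # y # zs)"
      then show "{(x # y # zs) ! i, (x # y # zs) ! Suc i} \<in> E"
        using r by (cases i) auto
    qed
  qed
  then show ?case using 1 by simp
qed auto

lemma ch_append: "ch E (xs @ ys) = (ch E xs \<and> ch E ys \<and> (xs \<noteq> [] \<and> ys \<noteq> [] \<longrightarrow> {last xs, hd ys} \<in> E))"
proof (induction xs)
  case (Cons a xs)
  then show ?case by (cases xs; cases ys) auto
qed auto

lemma ch_rev: "ch E (rev xs) = ch E xs"
proof (induction E xs rule: ch.induct)
  case (1 E x y zs)
  have "rev (x # y # zs) = rev (y # zs) @ [x]" by simp
  then have "ch E (rev (x # y # zs)) = (ch E (y # zs) \<and> {y, x} \<in> E)"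
    using 1 by (simp only: ch_append) (simp add: last_rev)
  then show ?case by (auto simp: insert_commute)
qed auto

lemma is_path_ch: "is_path E p u v = (p \<noteq> [] \<and> hd p = u \<and> last p = v \<and> distinct p \<and> ch E p)"
  unfolding is_path_def ch_iff by blast

lemma path_same: "is_path E p u u \<Longrightarrow> p = [u]"
proof -
  assume "is_path E p u u"
  then have h: "p \<noteq> []" "hd p = u" "last p = u" "distinct p" by (auto simp: is_path_ch)
  then obtain q where q: "p = u # q" by (cases p) auto
  show "p = [u]"
  proof (cases q)
    case Nil then show ?thesis using q by simp
  next
    case (Cons a r)
    then have "last p \<in> set q" using q by simp
    then show ?thesis using h q by auto
  qed
qed

lemma path_in_V:
  assumes "is_path E p u v" "u \<in> V" "\<forall>e\<in>E. e \<subseteq> V"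
  shows "set p \<subseteq> V"
proof
  fix w assume "w \<in> set p"
  then obtain i where i: "i < length p" "p ! i = w" by (auto simp: in_set_conv_nth)
  show "w \<in> V"
  proof (cases i)
    case 0 then show ?thesis using assms i by (cases p) (auto simp: is_path_def)
  next
    case (Suc j)
    then have "{p ! j, p ! Suc j} \<in> E" using assms(1) i by (auto simp: is_path_def)
    then show ?thesis using assms(3) i Suc by auto
  qed
qed

definition conv :: "nat set \<Rightarrow> nat set set \<Rightarrow> nat set \<Rightarrow> bool" where
  "conv V E S \<longleftrightarrow> S \<subseteq> V \<and> (\<forall>u\<in>S. \<forall>v\<in>S. \<forall>p. is_path E p u v \<longrightarrow> set p \<subseteq> S)"

lemma helly3:
  assumes conn: "\<forall>u\<in>V. \<forall>v\<in>V. \<exists>p. is_path E p u v"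
    and cA: "conv V E A" and cB: "conv V E B" and cC: "conv V E C"
    and "A \<inter> B \<noteq> {}" "A \<inter> C \<noteq> {}" "B \<inter> C \<noteq> {}"
  shows "A \<inter> B \<inter> C \<noteq> {}"
proof -
  obtain a where a: "a \<in> B" "a \<in> C" using assms by blast
  obtain b where b: "b \<in> A" "b \<in> C" using assms by blast
  obtain c where c: "c \<in> A" "c \<in> B" using assms by blast
  have V: "a \<in> V" "b \<in> V" "c \<in> V" using a b c cA cB by (auto simp: conv_def)
  obtain P where P: "is_path E P a b" using conn V by blast
  obtain Q where Q: "is_path E Q a c" using conn V by blast
  have Pp: "P \<noteq> []" "hd P = a" "last P = b" "distinct P" "ch E P" using P by (auto simp: is_path_ch)
  have Qp: "Q \<noteq> []" "hd Q = a" "last Q = c" "distinct Q" "ch E Q" using Q by (auto simp: is_path_ch)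
  have "\<exists>x\<in>set P. x \<in> set Q" using Pp Qp by (cases P; cases Q) auto
  then obtain P1 m P2 where Ps: "P = P1 @ m # P2" "m \<in> set Q" "\<forall>z\<in>set P2. z \<notin> set Q"
    using split_list_last_prop[of P "\<lambda>x. x \<in> set Q"] by blast
  obtain Q1 Q2 where Qs: "Q = Q1 @ m # Q2" using Ps(2) split_list by metis
  define R where "R = rev P2 @ m # Q2"
  have chP2: "ch E (m # P2)" using Pp(5) Ps(1) by (simp add: ch_append)
  have chQ2: "ch E (m # Q2)" using Qp(5) Qs by (simp add: ch_append)
  have "ch E (rev P2 @ [m])" using chP2 ch_rev[of E "m # P2"] by simp
  then have chR: "ch E R" unfolding R_def using chQ2
    by (subst ch_append) (simp add: ch_append)
  have hdR: "hd R = b"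
  proof (cases P2)
    case Nil then show ?thesis using Pp(3) Ps(1) R_def by simp
  next
    case (Cons x xs)
    then have "hd (rev P2) = last P2" by (simp add: hd_rev)
    then show ?thesis using Pp(3) Ps(1) R_def Cons by (auto simp: hd_append split: if_splits)
  qed
  have lastR: "last R = c" using Qp(3) Qs R_def by simp
  have "set P2 \<inter> set Q2 = {}" using Ps(3) Qs by auto
  then have dR: "distinct R" using Pp(4) Qp(4) Ps(1) Qs R_def by auto
  have pR: "is_path E R b c" using chR hdR lastR dR by (auto simp: is_path_ch R_def)
  have "set R \<subseteq> A" using cA b c pR unfolding conv_def by blast
  then have "m \<in> A" unfolding R_def by auto
  moreover have "set P \<subseteq> C" using cC a b P unfolding conv_def by blast
  then have "m \<in> C" using Ps(1) by auto
  moreover have "set Q \<subseteq> B" using cB a c Q unfolding conv_def by blast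
  then have "m \<in> B" using Ps(2) by auto
  ultimately show ?thesis by blast
qed


lemma conv_Int: "conv V E A \<Longrightarrow> conv V E B \<Longrightarrow> conv V E (A \<inter> B)"
  unfolding conv_def by blast

lemma helly:
  assumes conn: "\<forall>u\<in>V. \<forall>v\<in>V. \<exists>p. is_path E p u v"
  shows "finite F \<Longrightarrow> F \<noteq> {} \<Longrightarrow> \<forall>S\<in>F. conv V E S \<Longrightarrow> \<forall>S\<in>F. \<forall>T\<in>F. S \<inter> T \<noteq> {}
    \<Longrightarrow> \<Inter>F \<noteq> {}"
proof (induction "card F" arbitrary: F rule: less_induct)
  case less
  show ?case
  proof (cases "\<exists>A\<in>F. \<exists>B\<in>F. A \<noteq> B")
    case True
    then obtain A B where AB: "A \<in> F" "B \<in> F" "A \<noteq> B" by blast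
    define F' where "F' = insert (A \<inter> B) (F - {A, B})"
    have fin: "finite F'" using less.prems F'_def by simp
    have "card (F - {A, B}) = card F - 2" using AB less.prems(1) by (simp add: card_Diff_subset)
    moreover have "card F \<ge> 2"
    proof -
      have "{A,B} \<subseteq> F" using AB by auto
      then have "card {A,B} \<le> card F" using less.prems(1) card_mono by blast
      then show ?thesis using AB by simp
    qed
    moreover have "card F' \<le> Suc (card (F - {A, B}))" unfolding F'_def
      using less.prems(1) by (simp add: card_insert_le_m1 card_insert_if)
    ultimately have "card F' < card F" by linarith
    moreover have "F' \<noteq> {}" unfolding F'_def by simp
    moreover have cF': "\<forall>S\<in>F'. conv V E S"
    proof -
      have "conv V E (A \<inter> B)" using less.prems(3) AB conv_Int by blast
      then show ?thesis using less.prems(3) unfolding F'_def by blast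
    qed
    moreover have "\<forall>S\<in>F'. \<forall>T\<in>F'. S \<inter> T \<noteq> {}"
    proof (intro ballI)
      fix S T assume S: "S \<in> F'" and T: "T \<in> F'"
      have ABC: "A \<inter> B \<inter> C \<noteq> {}" if "C \<in> F" for C
      proof (rule helly3[OF conn])
        show "conv V E A" "conv V E B" "conv V E C" using less.prems(3) AB that by auto
        show "A \<inter> B \<noteq> {}" "A \<inter> C \<noteq> {}" "B \<inter> C \<noteq> {}"
          using less.prems(4) AB that by auto
      qed
      show "S \<inter> T \<noteq> {}"
      proof (cases "S = A \<inter> B")
        case True
        then show ?thesis
        proof (cases "T = A \<inter> B")
          case True then show ?thesis using \<open>S = A \<inter> B\<close> less.prems(4) AB by simp
        next
          case False then have "T \<in> F" using T F'_def by auto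
          then show ?thesis using ABC \<open>S = A \<inter> B\<close> by simp
        qed
      next
        case False then have SF: "S \<in> F" using S F'_def by auto
        show ?thesis
        proof (cases "T = A \<inter> B")
          case True then show ?thesis using ABC[OF SF] by blast
        next
          case False then have "T \<in> F" using T F'_def by auto
          then show ?thesis using SF less.prems(4) by blast
        qed
      qed
    qed
    ultimately have "\<Inter>F' \<noteq> {}" using less.hyps[of F'] fin by simp
    moreover have "\<Inter>F' = \<Inter>F"
    proof -
      have "F = insert A (insert B (F - {A,B}))" using AB by blast
      then have "\<Inter>F = A \<inter> (B \<inter> \<Inter>(F - {A,B}))" by (metis Inf_insert)
      then show ?thesis unfolding F'_def by (simp add: Int_assoc)
    qed
    ultimately show ?thesis by simp
  next
    case False
    obtain A where A: "A \<in> F" using less.prems(2) by blast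
    then have "F = {A}" using False by blast
    moreover have "A \<inter> A \<noteq> {}" using less.prems(4) A by blast
    ultimately show ?thesis by simp
  qed
qed

lemma jt_clique:
  assumes jt: "jointree \<Delta> V E \<chi>"
    and K: "finite K" "K \<noteq> {}"
    and pw: "\<forall>x\<in>K. \<forall>y\<in>K. \<exists>C\<in>\<Delta>. {x, y} \<subseteq> vars_cl C"
  shows "\<exists>t\<in>V. K \<subseteq> \<chi> t"
proof -
  note J = jt[unfolded jointree_def]
  have tree: "is_tree V E" using J by (rule conjunct1)
  have cov: "\<forall>C\<in>\<Delta>. \<exists>t\<in>V. vars_cl C \<subseteq> \<chi> t" using J by blast
  have pc: "\<And>x u v p. u \<in> V \<Longrightarrow> v \<in> V \<Longrightarrow> x \<in> \<chi> u \<Longrightarrow> x \<in> \<chi> v \<Longrightarrow> is_path E p u v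
        \<Longrightarrow> (\<forall>w\<in>set p. x \<in> \<chi> w)" using J by blast
  have conn: "\<forall>u\<in>V. \<forall>v\<in>V. \<exists>p. is_path E p u v" using tree unfolding is_tree_def by blast
  have "\<forall>e\<in>E. \<exists>u v. u \<in> V \<and> v \<in> V \<and> u \<noteq> v \<and> e = {u, v}"
    using tree unfolding is_tree_def by (elim conjE)
  then have eV: "\<forall>e\<in>E. e \<subseteq> V" by fastforce
  define T where "T x = {t \<in> V. x \<in> \<chi> t}" for x
  have cT: "conv V E (T x)" for x
    unfolding conv_def T_def
  proof (intro conjI ballI allI impI)
    fix u v p assume u: "u \<in> {t \<in> V. x \<in> \<chi> t}" and v: "v \<in> {t \<in> V. x \<in> \<chi> t}"
      and p: "is_path E p u v"
    have "set p \<subseteq> V" using path_in_V[OF p _ eV] u by auto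
    moreover have "\<forall>w\<in>set p. x \<in> \<chi> w" using pc[of u v x p] u v p by blast
    ultimately show "set p \<subseteq> {t \<in> V. x \<in> \<chi> t}" by blast
  qed blast
  have "\<Inter>(T ` K) \<noteq> {}"
  proof (rule helly[OF conn])
    show "finite (T ` K)" using K by simp
    show "T ` K \<noteq> {}" using K by simp
    show "\<forall>S\<in>T ` K. conv V E S" using cT by auto
    show "\<forall>S\<in>T ` K. \<forall>S'\<in>T ` K. S \<inter> S' \<noteq> {}"
    proof (intro ballI)
      fix S S' assume "S \<in> T ` K" "S' \<in> T ` K"
      then obtain x y where xy: "x \<in> K" "y \<in> K" "S = T x" "S' = T y" by blast
      then obtain C where C: "C \<in> \<Delta>" "{x,y} \<subseteq> vars_cl C" using pw by blast
      obtain t where t: "t \<in> V" "vars_cl C \<subseteq> \<chi> t" using cov C(1) by blast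
      have "t \<in> V" "{x,y} \<subseteq> \<chi> t" using t C(2) by auto
      then have "t \<in> T x" "t \<in> T y" unfolding T_def by auto
      then show "S \<inter> S' \<noteq> {}" using xy(3,4) by blast
    qed
  qed
  then obtain t where tK: "\<forall>x\<in>K. t \<in> T x" by blast
  obtain k where "k \<in> K" using K by blast
  then have "t \<in> V" using tK unfolding T_def by simp
  moreover have "K \<subseteq> \<chi> t" using tK unfolding T_def by blast
  ultimately show ?thesis by blast
qed

lemma finite_vars: "is_cnf \<Delta> \<Longrightarrow> finite (vars \<Delta>)"
  unfolding is_cnf_def vars_def vars_cl_def by auto

lemma single_tree: "is_tree {0::nat} {}"
  unfolding is_tree_def
proof (intro conjI)
  show "\<forall>u\<in>{0::nat}. \<forall>v\<in>{0}. \<exists>p. is_path {} p u v"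
    by (auto simp: is_path_ch intro!: exI[of _ "[0]"])
qed simp_all

lemma single_jt: "jointree \<Delta> {0} {} (\<lambda>_. vars \<Delta>)"
  unfolding jointree_def
proof (intro conjI)
  show "is_tree {0::nat} {}" by (rule single_tree)
  show "\<forall>C\<in>\<Delta>. \<exists>t\<in>{0::nat}. vars_cl C \<subseteq> vars \<Delta>" unfolding vars_def by blast
  show "\<forall>t\<in>{0::nat}. vars \<Delta> \<subseteq> vars \<Delta>" by blast
  show "\<forall>x u v p. u \<in> {0::nat} \<and> v \<in> {0} \<and> x \<in> vars \<Delta> \<and> x \<in> vars \<Delta> \<and> is_path {} p u v \<longrightarrow>
    (\<forall>w\<in>set p. x \<in> vars \<Delta>)" by blast
qed

lemma tw_lower:
  assumes "is_cnf \<Delta>" and K: "finite K" "K \<noteq> {}" "card K = n + 1"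
    and pw: "\<forall>x\<in>K. \<forall>y\<in>K. \<exists>C\<in>\<Delta>. {x, y} \<subseteq> vars_cl C"
  shows "n \<le> primal_tw \<Delta>"
proof -
  have ex: "\<exists>w. \<exists>V E \<chi>. jointree \<Delta> V E \<chi> \<and> jt_width V \<chi> = w" using single_jt by blast
  obtain V E \<chi> where jt: "jointree \<Delta> V E \<chi>" and w: "jt_width V \<chi> = primal_tw \<Delta>"
    using LeastI_ex[OF ex] unfolding primal_tw_def by blast
  obtain t where t: "t \<in> V" "K \<subseteq> \<chi> t" using jt_clique[OF jt K(1,2) pw] by blast
  note J = jt[unfolded jointree_def]
  have fV: "finite V" using J[THEN conjunct1, unfolded is_tree_def, THEN conjunct1] .
  have "\<forall>t\<in>V. \<chi> t \<subseteq> vars \<Delta>" using J by (elim conjE)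
  then have "\<chi> t \<subseteq> vars \<Delta>" using t by blast
  then have "finite (\<chi> t)" using finite_vars[OF assms(1)] finite_subset by blast
  then have "card K \<le> card (\<chi> t)" using t(2) by (rule card_mono)
  then have "n + 1 \<le> card (\<chi> t)" using K(3) by simp
  also have "\<dots> \<le> Max ((\<lambda>t. card (\<chi> t)) ` V)" using fV t by (intro Max_ge) auto
  finally show ?thesis using w unfolding jt_width_def by simp
qed

lemma is_tree_star:
  fixes V :: "nat set"
  assumes "finite V" "0 \<in> V"
  shows "is_tree V ((\<lambda>v. {0, v}) ` (V - {0}))" (is "is_tree V ?E")
  unfolding is_tree_def
proof (intro conjI)
  show "finite V" "V \<noteq> {}" using assms by auto
  show "\<forall>e\<in>?E. \<exists>u v. u \<in> V \<and> v \<in> V \<and> u \<noteq> v \<and> e = {u, v}" using assms by blast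
  show "\<forall>u\<in>V. \<forall>v\<in>V. \<exists>p. is_path ?E p u v"
  proof (intro ballI)
    fix u v assume u: "u \<in> V" and v: "v \<in> V"
    show "\<exists>p. is_path ?E p u v"
    proof (cases "u = v")
      case True then show ?thesis by (intro exI[of _ "[u]"]) (simp add: is_path_ch)
    next
      case False
      show ?thesis
      proof (cases "u = 0")
        case True
        then have "{u, v} \<in> ?E" using v False by auto
        then show ?thesis using False by (intro exI[of _ "[u, v]"]) (simp add: is_path_ch)
      next
        case u0: False
        show ?thesis
        proof (cases "v = 0")
          case True
          then have "{u, v} \<in> ?E" using u u0 by (auto simp: insert_commute)
          then show ?thesis using False by (intro exI[of _ "[u, v]"]) (simp add: is_path_ch)
        next
          case v0: False
          have "{u, 0} \<in> ?E" using u u0 by (auto simp: insert_commute)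
          moreover have "{0, v} \<in> ?E" using v v0 by auto
          ultimately show ?thesis using False u0 v0
            by (intro exI[of _ "[u, 0, v]"]) (simp add: is_path_ch)
        qed
      qed
    qed
  qed
  have "inj_on (\<lambda>v. {0::nat, v}) (V - {0})" by (auto simp: inj_on_def doubleton_eq_iff)
  then have "card ?E = card (V - {0})" by (rule card_image)
  moreover have "card (V - {0}) = card V - 1" using assms by (simp add: card_Diff_singleton)
  moreover have "card V > 0" using assms card_gt_0_iff by blast
  ultimately show "card ?E + 1 = card V" by linarith
qed

lemma tw_star:
  fixes \<Delta> :: "nat cnf"
  assumes cnf: "is_cnf \<Delta>" and v0: "0 \<in> vars \<Delta>" and v1: "1 \<in> vars \<Delta>"
    and cl: "\<forall>C\<in>\<Delta>. \<exists>v. vars_cl C \<subseteq> {0, 1, v}"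
  shows "primal_tw \<Delta> \<le> 2"
proof -
  define V where "V = vars \<Delta>"
  define E where "E = (\<lambda>v. {0::nat, v}) ` (V - {0})"
  define \<chi> where "\<chi> t = {0::nat, 1, t}" for t
  have fV: "finite V" using finite_vars[OF cnf] V_def by simp
  have jt: "jointree \<Delta> V E \<chi>"
    unfolding jointree_def
  proof (intro conjI)
    show "is_tree V E" unfolding E_def using is_tree_star fV v0 V_def by blast
    show "\<forall>t\<in>V. \<chi> t \<subseteq> vars \<Delta>" using v0 v1 V_def \<chi>_def by auto
    show "\<forall>C\<in>\<Delta>. \<exists>t\<in>V. vars_cl C \<subseteq> \<chi> t"
    proof
      fix C assume C: "C \<in> \<Delta>"
      then obtain v where v: "vars_cl C \<subseteq> {0, 1, v}" using cl by blast
      have sub: "vars_cl C \<subseteq> V" using C unfolding V_def vars_def by auto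
      show "\<exists>t\<in>V. vars_cl C \<subseteq> \<chi> t"
      proof (cases "v \<in> vars_cl C")
        case True then show ?thesis using sub v \<chi>_def by auto
      next
        case False then have "vars_cl C \<subseteq> \<chi> 0" using v \<chi>_def by auto
        then show ?thesis using v0 V_def by auto
      qed
    qed
    show "\<forall>x u v p. u \<in> V \<and> v \<in> V \<and> x \<in> \<chi> u \<and> x \<in> \<chi> v \<and> is_path E p u v \<longrightarrow> (\<forall>w\<in>set p. x \<in> \<chi> w)"
    proof (intro allI impI)
      fix x u v p assume h: "u \<in> V \<and> v \<in> V \<and> x \<in> \<chi> u \<and> x \<in> \<chi> v \<and> is_path E p u v"
      show "\<forall>w\<in>set p. x \<in> \<chi> w"
      proof (cases "x \<in> {0, 1}")
        case True then show ?thesis using \<chi>_def by auto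
      next
        case False
        then have "x = u" "x = v" using h \<chi>_def by auto
        then have "p = [x]" using h path_same by blast
        then show ?thesis using \<chi>_def by auto
      qed
    qed
  qed
  have "jt_width V \<chi> \<le> 2"
  proof -
    have "\<forall>t. card (\<chi> t) \<le> 3"
    proof
      fix t
      have "\<chi> t = set [0, 1, t]" unfolding \<chi>_def by simp
      then show "card (\<chi> t) \<le> 3" using card_length[of "[0::nat, 1, t]"] by simp
    qed
    moreover have "V \<noteq> {}" using v0 V_def by auto
    ultimately have "Max ((\<lambda>t. card (\<chi> t)) ` V) \<le> 3" using fV by (subst Max_le_iff) auto
    then show ?thesis unfolding jt_width_def by simp
  qed
  moreover have "primal_tw \<Delta> \<le> jt_width V \<chi>" unfolding primal_tw_def
    by (rule Least_le) (use jt in blast)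
  ultimately show ?thesis by linarith
qed

definition pc :: "nat \<Rightarrow> nat clause" where "pc i = {Pos i}"
definition nc :: "nat \<Rightarrow> nat clause" where "nc i = {Neg i}"
definition bic :: "nat set \<Rightarrow> nat set \<Rightarrow> nat cnf" where
  "bic I J = (\<lambda>(i, j). {Pos i, Neg j}) ` (I \<times> J)"
definition XX :: "nat \<Rightarrow> nat set" where "XX n = {7..<n+8}"
definition SS :: "nat \<Rightarrow> nat cnf" where "SS n = pc ` {n+8..<n+8+(n^3 - (n+1)^2 - 6)}"
definition D :: "nat \<Rightarrow> nat cnf" where "D n = bic (XX n) (XX n) \<union> bic {2,3} {4,5,6} \<union> SS n"
definition D1 :: "nat \<Rightarrow> nat cnf" where
  "D1 n = (D n - bic (XX n) (XX n)) \<union> insert (Pos 0) ` pc ` XX n \<union> insert (Neg 0) ` nc ` XX n"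
definition D2 :: "nat \<Rightarrow> nat cnf" where
  "D2 n = (D1 n - bic {2,3} {4,5,6}) \<union> insert (Pos 1) ` pc ` {2,3} \<union> insert (Neg 1) ` nc ` {4,5,6}"

lemma res_bic: "resolvents (pc ` I) (nc ` J) = bic I J"
  unfolding resolvents_def bic_def pc_def nc_def by auto

lemma bic_eq: "{Pos a, Neg b} = {Pos c, Neg d} \<longleftrightarrow> a = c \<and> b = d"
  by (auto simp: doubleton_eq_iff)

lemma card_bic: "finite I \<Longrightarrow> finite J \<Longrightarrow> card (bic I J) = card I * card J"
  unfolding bic_def
  by (subst card_image) (auto simp: inj_on_def bic_eq card_cartesian_product)

lemma mem_bic: "C \<in> bic I J \<longleftrightarrow> (\<exists>i\<in>I. \<exists>j\<in>J. C = {Pos i, Neg j})"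
  unfolding bic_def by auto

lemma vars_iff: "x \<in> vars \<Delta> \<longleftrightarrow> (\<exists>C\<in>\<Delta>. x \<in> vars_cl C)"
  unfolding vars_def by auto

lemma vars_cl_simps[simp]: "vars_cl {} = {}" "vars_cl (insert l C) = insert (var l) (vars_cl C)"
  unfolding vars_cl_def by auto

lemma vars_cl_pc[simp]: "vars_cl (pc i) = {i}" "vars_cl (nc i) = {i}"
  unfolding pc_def nc_def by auto

lemma pc_ne_bic: "pc v \<notin> bic I J" "nc v \<notin> bic I J"
  unfolding pc_def nc_def bic_def by auto

lemma D_vars: "C \<in> D n \<Longrightarrow> vars_cl C \<subseteq> {2..}"
  unfolding D_def SS_def XX_def by (auto simp: mem_bic)

lemma finite_bic: "finite I \<Longrightarrow> finite J \<Longrightarrow> finite (bic I J)"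
  unfolding bic_def by simp

lemma bic_finite_cl: "C \<in> bic I J \<Longrightarrow> finite C"
  unfolding bic_def by auto

lemma finite_XX[simp]: "finite (XX n)" by (simp add: XX_def)

lemma arith3: "(n::nat) \<ge> 3 \<Longrightarrow> (n+1)^2 + 6 \<le> n^3"
proof -
  assume n: "n \<ge> 3"
  have "3 * (n * n) \<le> n * (n * n)" using n by (intro mult_le_mono1) 
  moreover have "n * n \<ge> 3 * n" using n by simp
  moreover have "(n+1)^2 + 6 = n*n + 2*n + 7" by (simp add: power2_eq_square)
  moreover have "n^3 = n*(n*n)" by (simp add: power3_eq_cube)
  ultimately show ?thesis using n by linarith
qed

lemma cnf_D: "is_cnf (D n)"
  unfolding is_cnf_def D_def SS_def XX_def
  by (auto intro: finite_bic bic_finite_cl simp: pc_def)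

lemma card_D: "n \<ge> 3 \<Longrightarrow> card (D n) = n ^ 3"
proof -
  assume n: "n \<ge> 3"
  have c1: "card (bic (XX n) (XX n)) = (n+1)^2" by (simp add: card_bic XX_def power2_eq_square)
  have c2: "card (bic {2,3} {4,5,6}) = 6" by (simp add: card_bic)
  have "inj pc" by (auto simp: inj_def pc_def)
  then have c3: "card (SS n) = n^3 - (n+1)^2 - 6" unfolding SS_def
    by (simp add: card_image inj_on_subset)
  have d12: "bic (XX n) (XX n) \<inter> bic {2,3} {4,5,6} = {}" by (auto simp: mem_bic bic_eq XX_def)
  have d3: "(bic (XX n) (XX n) \<union> bic {2,3} {4,5,6}) \<inter> SS n = {}"
    unfolding SS_def by (auto simp: pc_ne_bic)
  have "card (D n) = card (bic (XX n) (XX n) \<union> bic {2,3} {4,5,6}) + card (SS n)"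
    unfolding D_def by (rule card_Un_disjoint) (auto simp: SS_def finite_bic pc_ne_bic)
  also have "card (bic (XX n) (XX n) \<union> bic {2,3} {4,5,6}) = (n+1)^2 + 6"
    using c1 c2 d12 by (subst card_Un_disjoint) (auto simp: XX_def finite_bic)
  finally show ?thesis using c3 arith3[OF n] by simp
qed


lemma bic_XX_sub: "bic (XX n) (XX n) \<subseteq> D n" unfolding D_def by auto

lemma D_lower: "n \<le> primal_tw (D n)"
proof (rule tw_lower[OF cnf_D, of "XX n"])
  show "finite (XX n)" by simp
  show "XX n \<noteq> {}" unfolding XX_def by auto
  show "card (XX n) = n + 1" unfolding XX_def by simp
  show "\<forall>x\<in>XX n. \<forall>y\<in>XX n. \<exists>C\<in>D n. {x, y} \<subseteq> vars_cl C"
  proof (intro ballI)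
    fix x y assume "x \<in> XX n" "y \<in> XX n"
    then have "{Pos x, Neg y} \<in> bic (XX n) (XX n)" unfolding mem_bic by blast
    then have "{Pos x, Neg y} \<in> D n" using bic_XX_sub by blast
    moreover have "{x, y} \<subseteq> vars_cl {Pos x, Neg y}" by simp
    ultimately show "\<exists>C\<in>D n. {x, y} \<subseteq> vars_cl C" by blast
  qed
qed

lemma bic23_sub: "bic {2,3} {4,5,6} \<subseteq> D1 n"
proof
  fix C assume C: "C \<in> bic {2,3} {4,5,6}"
  then have "C \<in> D n" unfolding D_def by auto
  moreover have "C \<notin> bic (XX n) (XX n)" using C by (auto simp: mem_bic bic_eq XX_def)
  ultimately show "C \<in> D1 n" unfolding D1_def by auto
qed

lemma D1_vars: "C \<in> D1 n \<Longrightarrow> vars_cl C \<subseteq> insert 0 {2..}"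
  unfolding D1_def XX_def using D_vars[of C n] by auto

lemma step1: assumes n: "n \<ge> 3" shows "bva_step (D n) (D1 n)"
  unfolding bva_step_def
proof (rule exI[of _ 0], rule exI[of _ "pc ` XX n"], rule exI[of _ "nc ` XX n"], intro conjI)
  show "0 \<notin> vars (D n)"
  proof
    assume "0 \<in> vars (D n)"
    then obtain C where "C \<in> D n" "0 \<in> vars_cl C" unfolding vars_iff by blast
    then show False using D_vars[of C n] by auto
  qed
  show "finite (pc ` XX n)" "finite (nc ` XX n)" by auto
  have mem: "i \<in> vars (D n)" if "i \<in> XX n" for i
  proof -
    have "{Pos i, Neg i} \<in> bic (XX n) (XX n)" using that unfolding mem_bic by blast
    then have "{Pos i, Neg i} \<in> D n" using bic_XX_sub by blast
    then show ?thesis unfolding vars_iff by (intro bexI[of _ "{Pos i, Neg i}"]) auto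
  qed
  show "\<forall>\<alpha>\<in>pc ` XX n. finite \<alpha> \<and> vars_cl \<alpha> \<subseteq> vars (D n)" using mem by (auto simp: pc_def)
  show "\<forall>\<alpha>\<in>nc ` XX n. finite \<alpha> \<and> vars_cl \<alpha> \<subseteq> vars (D n)" using mem by (auto simp: nc_def)
  show "resolvents (pc ` XX n) (nc ` XX n) \<subseteq> D n" by (simp add: res_bic bic_XX_sub)
  have c: "card (resolvents (pc ` XX n) (nc ` XX n)) = (n+1) * (n+1)"
    by (simp add: res_bic card_bic XX_def)
  have a: "card (insert (Pos 0) ` pc ` XX n) \<le> n + 1"
  proof -
    have "card (insert (Pos 0) ` pc ` XX n) \<le> card (pc ` XX n)" by (rule card_image_le) simp
    also have "\<dots> \<le> card (XX n)" by (rule card_image_le) simp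
    finally show ?thesis by (simp add: XX_def)
  qed
  have b: "card (insert (Neg 0) ` nc ` XX n) \<le> n + 1"
  proof -
    have "card (insert (Neg 0) ` nc ` XX n) \<le> card (nc ` XX n)" by (rule card_image_le) simp
    also have "\<dots> \<le> card (XX n)" by (rule card_image_le) simp
    finally show ?thesis by (simp add: XX_def)
  qed
  have "4 * (n+1) \<le> (n+1) * (n+1)" using n by (intro mult_le_mono1) simp
  then have "(n+1) + (n+1) < card (resolvents (pc ` XX n) (nc ` XX n))" unfolding c by simp
  then show "card (insert (Pos 0) ` pc ` XX n) + card (insert (Neg 0) ` nc ` XX n)
      < card (resolvents (pc ` XX n) (nc ` XX n))" using a b by linarith
  show "D1 n = D n - resolvents (pc ` XX n) (nc ` XX n) \<union> insert (Pos 0) ` pc ` XX n \<union>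
      insert (Neg 0) ` nc ` XX n" by (simp add: D1_def res_bic)
qed


lemma D1_mem_D: "C \<in> bic {2,3} {4,5,6} \<Longrightarrow> C \<in> D1 n" using bic23_sub by blast

lemma step2: "bva_step (D1 n) (D2 n)"
  unfolding bva_step_def
proof (rule exI[of _ 1], rule exI[of _ "pc ` {2,3}"], rule exI[of _ "nc ` {4,5,6}"], intro conjI)
  show "1 \<notin> vars (D1 n)"
  proof
    assume "1 \<in> vars (D1 n)"
    then obtain C where "C \<in> D1 n" "1 \<in> vars_cl C" unfolding vars_iff by blast
    then show False using D1_vars[of C n] by auto
  qed
  show "finite (pc ` {2,3})" "finite (nc ` {4,5,6})" by auto
  have mem: "i \<in> vars (D1 n)" if "i \<in> {2,3} \<and> j \<in> {4,5,6} \<or> j \<in> {2,3} \<and> i \<in> {4,5,6}" for i j :: nat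
  proof -
    from that show ?thesis
    proof
      assume h: "i \<in> {2,3} \<and> j \<in> {4,5,6}"
      then have "{Pos i, Neg j} \<in> bic {2,3} {4,5,6}" unfolding mem_bic by blast
      then have "{Pos i, Neg j} \<in> D1 n" by (rule D1_mem_D)
      then show ?thesis unfolding vars_iff by (intro bexI[of _ "{Pos i, Neg j}"]) auto
    next
      assume h: "j \<in> {2,3} \<and> i \<in> {4,5,6}"
      then have "{Pos j, Neg i} \<in> bic {2,3} {4,5,6}" unfolding mem_bic by blast
      then have "{Pos j, Neg i} \<in> D1 n" by (rule D1_mem_D)
      then show ?thesis unfolding vars_iff by (intro bexI[of _ "{Pos j, Neg i}"]) auto
    qed
  qed
  have m2: "2 \<in> vars (D1 n)" "3 \<in> vars (D1 n)" using mem[of _ 4] by auto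
  have m4: "4 \<in> vars (D1 n)" "5 \<in> vars (D1 n)" "6 \<in> vars (D1 n)" using mem[of _ 2] by auto
  show "\<forall>\<alpha>\<in>pc ` {2,3}. finite \<alpha> \<and> vars_cl \<alpha> \<subseteq> vars (D1 n)" using m2 by (auto simp: pc_def)
  show "\<forall>\<alpha>\<in>nc ` {4,5,6}. finite \<alpha> \<and> vars_cl \<alpha> \<subseteq> vars (D1 n)" using m4 by (auto simp: nc_def)
  show "resolvents (pc ` {2,3}) (nc ` {4,5,6}) \<subseteq> D1 n" unfolding res_bic by (rule bic23_sub)
  have c: "card (resolvents (pc ` {2,3}) (nc ` {4,5,6})) = 6" unfolding res_bic by (simp add: card_bic)
  have a: "card (insert (Pos 1) ` pc ` {2,3}) \<le> 2"
  proof -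
    have "card (insert (Pos 1) ` pc ` {2,3}) \<le> card (pc ` {2::nat,3})" by (rule card_image_le) simp
    also have "\<dots> \<le> card {2::nat,3}" by (rule card_image_le) simp
    finally show ?thesis by simp
  qed
  have b: "card (insert (Neg 1) ` nc ` {4,5,6}) \<le> 3"
  proof -
    have "card (insert (Neg 1) ` nc ` {4,5,6}) \<le> card (nc ` {4::nat,5,6})" by (rule card_image_le) simp
    also have "\<dots> \<le> card {4::nat,5,6}" by (rule card_image_le) simp
    finally show ?thesis by simp
  qed
  show "card (insert (Pos 1) ` pc ` {2,3}) + card (insert (Neg 1) ` nc ` {4,5,6})
      < card (resolvents (pc ` {2,3}) (nc ` {4,5,6}))" using a b c by linarith
  show "D2 n = D1 n - resolvents (pc ` {2,3}) (nc ` {4,5,6}) \<union> insert (Pos 1) ` pc ` {2,3} \<union>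
      insert (Neg 1) ` nc ` {4,5,6}" unfolding res_bic D2_def ..
qed

lemma set_aux1: "A - X - Y \<subseteq> S \<Longrightarrow> (A - X \<union> P \<union> Q) - Y \<subseteq> S \<union> P \<union> Q" by blast
lemma set_aux2: "B - Y \<subseteq> T \<Longrightarrow> (B - Y \<union> P \<union> Q) \<subseteq> T \<union> P \<union> Q" by blast
lemma set_aux3: "(X \<union> Y \<union> S) - X - Y \<subseteq> S" by blast

lemma D2_sub: "D2 n \<subseteq> SS n \<union> insert (Pos 0) ` pc ` XX n \<union> insert (Neg 0) ` nc ` XX n
   \<union> insert (Pos 1) ` pc ` {2,3} \<union> insert (Neg 1) ` nc ` {4,5,6}"
proof -
  have "D n - bic (XX n) (XX n) - bic {2,3} {4,5,6} \<subseteq> SS n" unfolding D_def by (rule set_aux3)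
  then have "D1 n - bic {2,3} {4,5,6} \<subseteq> SS n \<union> insert (Pos 0) ` pc ` XX n \<union> insert (Neg 0) ` nc ` XX n"
    unfolding D1_def by (rule set_aux1)
  then show ?thesis unfolding D2_def by (rule set_aux2)
qed

lemma D2_cnf: "is_cnf (D2 n)"
proof -
  have "finite (SS n \<union> insert (Pos 0) ` pc ` XX n \<union> insert (Neg 0) ` nc ` XX n
   \<union> insert (Pos 1) ` pc ` {2,3} \<union> insert (Neg 1) ` nc ` {4,5,6})" by (simp add: SS_def)
  then have "finite (D2 n)" using D2_sub finite_subset by blast
  moreover have "\<forall>C\<in>D2 n. finite C"
  proof
    fix C assume "C \<in> D2 n"
    then have "C \<in> SS n \<union> insert (Pos 0) ` pc ` XX n \<union> insert (Neg 0) ` nc ` XX n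
   \<union> insert (Pos 1) ` pc ` {2,3} \<union> insert (Neg 1) ` nc ` {4,5,6}" by (rule subsetD[OF D2_sub])
    then show "finite C" by (auto simp: SS_def pc_def nc_def)
  qed
  ultimately show ?thesis unfolding is_cnf_def by blast
qed

lemma D2_cl: "\<forall>C\<in>D2 n. \<exists>v. vars_cl C \<subseteq> {0, 1, v}"
proof
  fix C assume "C \<in> D2 n"
  then have "C \<in> SS n \<union> insert (Pos 0) ` pc ` XX n \<union> insert (Neg 0) ` nc ` XX n
   \<union> insert (Pos 1) ` pc ` {2,3} \<union> insert (Neg 1) ` nc ` {4,5,6}" by (rule subsetD[OF D2_sub])
  then have "\<exists>v. C = pc v \<or> C = insert (Pos 0) (pc v) \<or> C = insert (Neg 0) (nc v)
     \<or> C = insert (Pos 1) (pc v) \<or> C = insert (Neg 1) (nc v)" unfolding SS_def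
    by (elim UnE imageE) blast+
  then obtain v where "C = pc v \<or> C = insert (Pos 0) (pc v) \<or> C = insert (Neg 0) (nc v)
     \<or> C = insert (Pos 1) (pc v) \<or> C = insert (Neg 1) (nc v)" by blast
  then show "\<exists>v. vars_cl C \<subseteq> {0, 1, v}" by (intro exI[of _ v]) (auto simp: pc_def nc_def)
qed

lemma D2_v0: "0 \<in> vars (D2 n)"
proof -
  have "7 \<in> XX n" by (simp add: XX_def)
  then have "insert (Pos 0) (pc 7) \<in> D1 n" unfolding D1_def by (intro UnI1 UnI2 imageI)
  moreover have "insert (Pos 0) (pc 7) \<notin> bic {2,3} {4,5,6}" by (auto simp: mem_bic pc_def)
  ultimately have "insert (Pos 0) (pc 7) \<in> D2 n" unfolding D2_def by (intro UnI1 DiffI)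
  then show ?thesis unfolding vars_iff by (intro bexI[of _ "insert (Pos 0) (pc 7)"]) auto
qed

lemma D2_v1: "1 \<in> vars (D2 n)"
proof -
  have "insert (Pos 1) (pc 2) \<in> D2 n" unfolding D2_def by (intro UnI1 UnI2 imageI) simp
  then show ?thesis unfolding vars_iff by (intro bexI[of _ "insert (Pos 1) (pc 2)"]) auto
qed

theorem theorem5:
  shows "\<exists>\<Delta> :: nat \<Rightarrow> nat cnf. \<forall>n\<ge>3.
           is_cnf (\<Delta> n) \<and> card (\<Delta> n) = n ^ 3 \<and>
           n \<le> primal_tw (\<Delta> n) \<and>
           (\<exists>\<Delta>1 \<Delta>2. bva_step (\<Delta> n) \<Delta>1 \<and> bva_step \<Delta>1 \<Delta>2 \<and> primal_tw \<Delta>2 \<le> 2)"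
proof (rule exI[of _ D], intro allI impI conjI)
  fix n :: nat assume n: "n \<ge> 3"
  show "is_cnf (D n)" by (rule cnf_D)
  show "card (D n) = n ^ 3" using n by (rule card_D)
  show "n \<le> primal_tw (D n)" by (rule D_lower)
  show "\<exists>\<Delta>1 \<Delta>2. bva_step (D n) \<Delta>1 \<and> bva_step \<Delta>1 \<Delta>2 \<and> primal_tw \<Delta>2 \<le> 2"
    using step1[OF n] step2[of n] tw_star[OF D2_cnf D2_v0 D2_v1 D2_cl]
    by (intro exI[of _ "D1 n"] exI[of _ "D2 n"] conjI)
qed

end
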